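(* Let $\mathcal{P}$ be a parallelohedron in $\mathbb{R}^n$ (centered at the origin). Then $\chi(\mathbb{R}^n,\Vert\cdot\Vert_{\mathcal{P}})\leq 2^n$.
   Context: A parallelohedron is a convex polytope that tiles $\mathbb{R}^n$ face-to-face by translations (such polytopes are centrally symmetric and tile by a lattice). $\Vert x\Vert_{\mathcal{P}}=\inf\{\lambda\geq0:x\in\lambda\mathcal{P}\}$. $\chi(\mathbb{R}^n,\Vert\cdot\Vert)$ denotes the chromatic number of the unit distance graph $G(\mathbb{R}^n,\Vert\cdot\Vert)$, whose vertices are the points of $\mathbb{R}^n$, with $x,y$ adjacent iff $\Vert x-y\Vert=1$. *)

theory Defs
  imports "HOL-Analysis.Analysis" "HOL-Library.Extended_Nat"
begin

definition parallelohedron :: "(real ^ 'n) set \<Rightarrow> bool" where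
  "parallelohedron P \<longleftrightarrow>
     polytope P \<and> interior P \<noteq> {} \<and>
     (\<exists>T :: (real ^ 'n) set.
        (\<Union>t\<in>T. (\<lambda>x. t + x) ` P) = UNIV \<and>
        (\<forall>t\<in>T. \<forall>s\<in>T. t \<noteq> s \<longrightarrow>
            interior ((\<lambda>x. t + x) ` P) \<inter> interior ((\<lambda>x. s + x) ` P) = {} \<and>
            ((\<lambda>x. t + x) ` P \<inter> (\<lambda>x. s + x) ` P) face_of ((\<lambda>x. t + x) ` P) \<and>
            ((\<lambda>x. t + x) ` P \<inter> (\<lambda>x. s + x) ` P) face_of ((\<lambda>x. s + x) ` P)))"

definition gauge_norm :: "(real ^ 'n) set \<Rightarrow> real ^ 'n \<Rightarrow> real" where
  "gauge_norm P x = Inf {l. l \<ge> 0 \<and> x \<in> (\<lambda>y. l *\<^sub>R y) ` P}"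

text \<open>Chromatic number of the unit distance graph of a (real-valued) distance function
  on the points of the type, as an extended natural (infinite if no finite colouring).\<close>
definition unit_dist_chromatic_number :: "('a::minus \<Rightarrow> real) \<Rightarrow> enat" where
  "unit_dist_chromatic_number N =
     Inf {enat k | k. \<exists>c :: 'a \<Rightarrow> nat. (\<forall>x. c x < k) \<and>
                        (\<forall>x y. N (x - y) = 1 \<longrightarrow> c x \<noteq> c y)}"

end

theory Submission
  imports Defs
begin

lemma finite_min_pos:
  fixes Q :: "'b \<Rightarrow> real \<Rightarrow> bool"
  assumes "finite S" "\<And>t. t \<in> S \<Longrightarrow> \<exists>e>0. \<forall>e'. 0 < e' \<and> e' \<le> e \<longrightarrow> Q t e'"
  shows "\<exists>e>0. \<forall>t\<in>S. \<forall>e'. 0 < e' \<and> e' \<le> e \<longrightarrow> Q t e'"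
  using assms
proof (induction S rule: finite_induct)
  case empty
  then show ?case by (rule_tac x=1 in exI) auto
next
  case (insert x F)
  obtain e1 where e1: "e1 > 0" "\<forall>t\<in>F. \<forall>e'. 0 < e' \<and> e' \<le> e1 \<longrightarrow> Q t e'" using insert by blast
  obtain e2 where e2: "e2 > 0" "\<forall>e'. 0 < e' \<and> e' \<le> e2 \<longrightarrow> Q x e'" using insert.prems by blast
  show ?case using e1 e2 by (rule_tac x="min e1 e2" in exI) auto
qed

lemma mem_transl: "(x \<in> (+) t ` S) \<longleftrightarrow> (x - t \<in> S)"
  for x t :: "'a::ab_group_add"
  apply (auto simp: image_iff)
  by (rule bexI[of _ "x - t"]) auto

locale ptiling =
  fixes P :: "'a::euclidean_space set" and T :: "'a set" and C :: "('a \<times> real) set"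
  assumes convP: "convex P" and cptP: "compact P" and symP: "\<And>x. x \<in> P \<Longrightarrow> -x \<in> P"
    and intP: "interior P \<noteq> {}"
    and finC: "finite C" and Cnz: "\<And>a b. (a,b) \<in> C \<Longrightarrow> a \<noteq> 0"
    and Peq: "P = {y. \<forall>(a,b)\<in>C. a \<bullet> y \<le> b}"
    and cover: "\<And>x. \<exists>t\<in>T. x \<in> (+) t ` P"
    and disj: "\<And>t s. t\<in>T \<Longrightarrow> s\<in>T \<Longrightarrow> t \<noteq> s \<Longrightarrow> interior ((+) t ` P) \<inter> interior ((+) s ` P) = {}"
    and f2f: "\<And>t s. t\<in>T \<Longrightarrow> s\<in>T \<Longrightarrow> t \<noteq> s \<Longrightarrow> ((+) t ` P \<inter> (+) s ` P) face_of ((+) t ` P)"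
begin

lemma closedP: "closed P" using cptP compact_imp_closed by blast
lemma boundedP: "bounded P" using cptP compact_imp_bounded by blast

lemma int_sym: "q \<in> interior P \<Longrightarrow> -q \<in> interior P"
proof -
  assume q: "q \<in> interior P"
  have "uminus ` P = P" using symP by (auto simp: image_iff) (metis minus_minus symP)
  then have "interior P = uminus ` interior P" using interior_negations[of P] by simp
  then show ?thesis using q by auto
qed

lemma zero_int: "0 \<in> interior P"
proof -
  obtain q where q: "q \<in> interior P" using intP by auto
  have "-q \<in> interior P" using int_sym q .
  have "(1/2) *\<^sub>R q + (1/2) *\<^sub>R (-q) \<in> interior P"
    using convexD[OF convex_interior[OF convP] q \<open>-q \<in> interior P\<close>, of "1/2" "1/2"] by simp
  then show ?thesis by simp
qed

lemma zero_P: "0 \<in> P" using zero_int interior_subset by blast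

lemma closure_int: "closure (interior P) = P"
  using convex_closure_interior[OF convP intP] closedP closure_closed by auto

lemma P_clint: "x \<in> P \<Longrightarrow> x \<in> closure (interior P)" using closure_int by simp

lemma int_tile: "interior ((+) t ` P) = (+) t ` interior P"
  by (rule interior_translation)

lemma tile_unique:
  assumes "t \<in> T" "s \<in> T" "x \<in> (+) t ` P" "x \<in> interior ((+) s ` P)"
  shows "t = s"
proof (rule ccontr)
  assume ne: "t \<noteq> s"
  have "x - t \<in> closure (interior P)" using assms(3) P_clint by (simp add: mem_transl)
  then have "x \<in> closure (interior ((+) t ` P))"
    by (simp add: int_tile closure_translation mem_transl)
  moreover have "open (interior ((+) s ` P))" by simp
  ultimately have "interior ((+) s ` P) \<inter> interior ((+) t ` P) \<noteq> {}"
    using assms(4) open_Int_closure_eq_empty[of "interior ((+) s ` P)" "interior ((+) t ` P)"] by blast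
  then show False using disj[OF assms(1,2) ne] by blast
qed

lemma closed_tile: "closed ((+) t ` P)" using closedP closed_translation by blast
lemma convex_tile: "convex ((+) t ` P)" using convP convex_translation by blast

lemma ball_int: "\<exists>r>0. ball 0 r \<subseteq> interior P"
  using zero_int open_interior open_contains_ball by blast

lemma T_sep: "\<exists>r>0. \<forall>t\<in>T. \<forall>s\<in>T. t \<noteq> s \<longrightarrow> r \<le> dist t s"
proof -
  obtain r where r: "r > 0" "ball 0 r \<subseteq> interior P" using ball_int by blast
  have "r \<le> dist t s" if "t \<in> T" "s \<in> T" "t \<noteq> s" for t s
  proof (rule ccontr)
    assume "\<not> r \<le> dist t s"
    then have "s - t \<in> ball 0 r" by (simp add: dist_norm norm_minus_commute)
    then have "s - t \<in> interior P" using r by blast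
    then have "s \<in> interior ((+) t ` P)" by (simp add: int_tile mem_transl)
    moreover have "s \<in> (+) s ` P" using zero_P by (simp add: mem_transl)
    ultimately have "s = t" using tile_unique that by blast
    then show False using that by simp
  qed
  then show ?thesis using r by blast
qed


lemma T_finite_compact: "compact K \<Longrightarrow> finite (K \<inter> T)"
proof -
  assume K: "compact K"
  obtain r where r: "r > 0" "\<forall>t\<in>T. \<forall>s\<in>T. t \<noteq> s \<longrightarrow> r \<le> dist t s" using T_sep by blast
  have "\<not> z islimpt T" for z
  proof
    assume "z islimpt T"
    then obtain y1 where y1: "y1 \<in> T" "y1 \<noteq> z" "dist y1 z < r/2"
      using r(1) by (meson half_gt_zero islimpt_approachable)
    then have "dist y1 z > 0" by simp
    then obtain y2 where y2: "y2 \<in> T" "y2 \<noteq> z" "dist y2 z < min (r/2) (dist y1 z)"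
      using r(1) \<open>z islimpt T\<close> by (meson half_gt_zero islimpt_approachable min_less_iff_conj)
    then have "y1 \<noteq> y2" by auto
    then have "r \<le> dist y1 y2" using r y1 y2 by blast
    moreover have "dist y1 y2 \<le> dist y1 z + dist y2 z" by (metis dist_commute dist_triangle)
    ultimately show False using y1 y2 by linarith
  qed
  then show ?thesis using finite_not_islimpt_in_compact[OF K] by blast
qed


lemma LF1:
  assumes "bounded B"
  shows "finite {t\<in>T. (+) t ` P \<inter> B \<noteq> {}}"
proof -
  obtain R1 where R1: "\<forall>x\<in>B. norm x \<le> R1" using assms bounded_pos by blast
  obtain R2 where R2: "\<forall>x\<in>P. norm x \<le> R2" using boundedP bounded_pos by blast
  have "t \<in> cball 0 (R1 + R2) \<inter> T" if "t \<in> {t\<in>T. (+) t ` P \<inter> B \<noteq> {}}" for t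
  proof -
    from that obtain x where x: "t \<in> T" "x \<in> (+) t ` P" "x \<in> B" by blast
    then have "x - t \<in> P" by (simp add: mem_transl)
    then have "norm (x - t) \<le> R2" using R2 by auto
    moreover have "norm x \<le> R1" using R1 \<open>x \<in> B\<close> by auto
    moreover have "norm t \<le> norm x + norm (x - t)"
      using norm_triangle_ineq4[of x "x - t"] by simp
    ultimately show ?thesis using \<open>t \<in> T\<close> by simp
  qed
  then have "{t\<in>T. (+) t ` P \<inter> B \<noteq> {}} \<subseteq> cball 0 (R1 + R2) \<inter> T" by blast
  moreover have "finite (cball 0 (R1 + R2) \<inter> T)" using T_finite_compact by simp
  ultimately show ?thesis using finite_subset by blast
qed


lemma LF2: "\<exists>\<rho>>0. \<forall>t\<in>T. (+) t ` P \<inter> ball x \<rho> \<noteq> {} \<longrightarrow> x \<in> (+) t ` P"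
proof -
  let ?S = "{t\<in>T. (+) t ` P \<inter> cball x 1 \<noteq> {}}"
  have fin: "finite ?S" using LF1 by blast
  have ex: "\<exists>e>0. \<forall>e'. 0 < e' \<and> e' \<le> e \<longrightarrow> ((+) t ` P \<inter> ball x e' \<noteq> {} \<longrightarrow> x \<in> (+) t ` P)" for t
  proof (cases "x \<in> (+) t ` P")
    case True then show ?thesis by (rule_tac x=1 in exI) auto
  next
    case False
    have "open (- ((+) t ` P))" using closed_tile by (simp add: closed_def)
    then obtain e where "e > 0" "ball x e \<subseteq> - ((+) t ` P)"
      using False open_contains_ball by blast
    moreover have "(+) t ` P \<inter> ball x e' = {}" if "e' \<le> e" "ball x e \<subseteq> - ((+) t ` P)" for e'
      using subset_ball[OF that(1), of x] that(2) by blast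
    ultimately show ?thesis by (rule_tac x=e in exI) auto
  qed
  have "\<exists>e>0. \<forall>t\<in>?S. \<forall>e'. 0 < e' \<and> e' \<le> e \<longrightarrow> ((+) t ` P \<inter> ball x e' \<noteq> {} \<longrightarrow> x \<in> (+) t ` P)"
    by (rule finite_min_pos[OF fin]) (rule ex)
  then obtain e where e: "e > 0" "\<forall>t\<in>?S. \<forall>e'. 0 < e' \<and> e' \<le> e \<longrightarrow> ((+) t ` P \<inter> ball x e' \<noteq> {} \<longrightarrow> x \<in> (+) t ` P)"
    by blast
  have "\<forall>t\<in>T. (+) t ` P \<inter> ball x (min e 1) \<noteq> {} \<longrightarrow> x \<in> (+) t ` P"
  proof (intro ballI impI)
    fix t assume t: "t \<in> T" "(+) t ` P \<inter> ball x (min e 1) \<noteq> {}"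
    then have "t \<in> ?S" using ball_subset_cball[of x "min e 1"] by auto
    moreover have "(+) t ` P \<inter> ball x (min e 1) \<noteq> {}" using t by blast
    ultimately show "x \<in> (+) t ` P" using e(1) e(2)[rule_format, of t "min e 1"] by simp
  qed
  then show ?thesis using e(1) by (rule_tac x="min e 1" in exI) auto
qed

lemma open_strict: "open {y. \<forall>(a,b)\<in>C. a \<bullet> y < b}"
proof -
  have "{y. \<forall>(a,b)\<in>C. a \<bullet> y < b} = (\<Inter>ab\<in>C. {y. fst ab \<bullet> y < snd ab})" by (force simp: case_prod_unfold)
  moreover have "open (\<Inter>ab\<in>C. {y. fst ab \<bullet> y < snd ab})"
    using finC by (intro open_INT) (auto intro: open_halfspace_lt)
  ultimately show ?thesis by simp
qed

lemma strict_int: "\<forall>(a,b)\<in>C. a \<bullet> y < b \<Longrightarrow> y \<in> interior P"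
proof -
  assume y: "\<forall>(a,b)\<in>C. a \<bullet> y < b"
  have "{y. \<forall>(a,b)\<in>C. a \<bullet> y < b} \<subseteq> P" by (subst Peq) fastforce
  then have "{y. \<forall>(a,b)\<in>C. a \<bullet> y < b} \<subseteq> interior P" using open_strict interior_maximal by blast
  then show ?thesis using y by blast
qed

lemma not_flat: "a \<noteq> 0 \<Longrightarrow> \<exists>p\<in>P. a \<bullet> p \<noteq> k"
proof -
  assume a: "a \<noteq> 0"
  obtain q where q: "q \<in> interior P" using intP by auto
  then obtain e where e: "e > 0" "ball q e \<subseteq> P" using open_interior open_contains_ball interior_subset
    by (metis (no_types, lifting) order_trans)
  define q' where "q' = q + (e / 2 / norm a) *\<^sub>R a"
  have "dist q q' = e/2" using a e by (simp add: q'_def dist_norm)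
  then have "q' \<in> P" using e by auto
  have "a \<bullet> q' = a \<bullet> q + (e/2/norm a) * (a \<bullet> a)" by (simp add: q'_def inner_add_right)
  moreover have "(e/2/norm a) * (a \<bullet> a) > 0" using a e by (intro mult_pos_pos divide_pos_pos) auto
  ultimately have "a \<bullet> q' \<noteq> a \<bullet> q" by linarith
  then show ?thesis using \<open>q' \<in> P\<close> q interior_subset by (metis subsetD)
qed

lemma cont_strict:
  assumes "a \<bullet> z < b"
  shows "\<exists>e>0. \<forall>e'. 0 < e' \<and> e' \<le> e \<longrightarrow> (\<forall>y\<in>ball z e'. a \<bullet> y < b)"
proof -
  define e where "e = (b - a \<bullet> z) / (norm a + 1)"
  have n1: "norm a + 1 > 0" using norm_ge_zero[of a] by linarith
  have e: "e > 0" using assms n1 by (simp add: e_def)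
  have "a \<bullet> y < b" if "dist z y < e" for y
  proof -
    have "a \<bullet> (y - z) \<le> norm a * norm (y - z)" by (rule norm_cauchy_schwarz)
    also have "\<dots> \<le> norm a * e" using that by (simp add: dist_norm norm_minus_commute mult_left_mono)
    also have "\<dots> < (norm a + 1) * e" using e by (simp add: distrib_right)
    also have "\<dots> = b - a \<bullet> z" using e_def n1 by simp
    finally show ?thesis by (simp add: inner_diff_right)
  qed
  then show ?thesis using e by (rule_tac x=e in exI) auto
qed

lemma regular:
  assumes zP: "z \<in> P" and zi: "z \<notin> interior P"
    and nb: "\<And>a b a' b'. (a,b)\<in>C \<Longrightarrow> (a',b')\<in>C \<Longrightarrow> a \<bullet> z = b \<Longrightarrow> a' \<bullet> z = b' \<Longrightarrow> \<exists>c. a' = c *\<^sub>R a"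
  shows "\<exists>a r. a \<noteq> 0 \<and> r > 0 \<and> (\<forall>y\<in>ball z r. y \<in> P \<longleftrightarrow> a \<bullet> y \<le> a \<bullet> z)"
proof -
  have zle: "\<forall>(a,b)\<in>C. a \<bullet> z \<le> b" using zP Peq by blast
  obtain a0 b0 where ab0: "(a0,b0) \<in> C" "a0 \<bullet> z = b0"
  proof (rule ccontr)
    assume "\<not> thesis"
    then have "\<forall>(a,b)\<in>C. a \<bullet> z < b" using zle that by fastforce
    then show False using strict_int zi by blast
  qed
  have a0: "a0 \<noteq> 0" using Cnz ab0 by blast
  have act: "a \<bullet> y \<le> b \<longleftrightarrow> a0 \<bullet> y \<le> a0 \<bullet> z" if ac: "(a,b) \<in> C" and az: "a \<bullet> z = b" for a b y
  proof -
    obtain c where c: "a = c *\<^sub>R a0" using nb[OF ab0(1) ac ab0(2) az] by blast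
    have "c \<noteq> 0" using c Cnz[OF ac] by auto
    have "c > 0"
    proof (rule ccontr)
      assume "\<not> c > 0"
      then have cn: "c < 0" using \<open>c \<noteq> 0\<close> by simp
      have "a0 \<bullet> p = a0 \<bullet> z" if "p \<in> P" for p
      proof -
        have "a0 \<bullet> p \<le> b0" using that Peq ab0 by blast
        moreover have "a \<bullet> p \<le> b" using \<open>p \<in> P\<close> Peq \<open>(a,b) \<in> C\<close> by blast
        then have "c * (a0 \<bullet> p) \<le> c * (a0 \<bullet> z)" using c \<open>a \<bullet> z = b\<close> by simp
        then have "a0 \<bullet> p \<ge> a0 \<bullet> z" using cn by (simp add: mult_le_cancel_left)
        ultimately show ?thesis using ab0 by simp
      qed
      then show False using not_flat[OF a0, of "a0 \<bullet> z"] by blast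
    qed
    have "a \<bullet> y = c * (a0 \<bullet> y)" "b = c * (a0 \<bullet> z)" using c \<open>a \<bullet> z = b\<close> by auto
    then show ?thesis using \<open>c > 0\<close> by (simp add: mult_le_cancel_left)
  qed
  have "\<exists>e>0. \<forall>ab\<in>C. \<forall>e'. 0 < e' \<and> e' \<le> e \<longrightarrow> (fst ab \<bullet> z < snd ab \<longrightarrow> (\<forall>y\<in>ball z e'. fst ab \<bullet> y < snd ab))"
  proof (rule finite_min_pos[OF finC])
    fix ab assume "ab \<in> C"
    show "\<exists>e>0. \<forall>e'. 0 < e' \<and> e' \<le> e \<longrightarrow> (fst ab \<bullet> z < snd ab \<longrightarrow> (\<forall>y\<in>ball z e'. fst ab \<bullet> y < snd ab))"
    proof (cases "fst ab \<bullet> z < snd ab")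
      case True then show ?thesis using cont_strict[OF True] by auto
    next
      case False then show ?thesis by (rule_tac x=1 in exI) auto
    qed
  qed
  then obtain r where r: "r > 0" "\<forall>ab\<in>C. fst ab \<bullet> z < snd ab \<longrightarrow> (\<forall>y\<in>ball z r. fst ab \<bullet> y < snd ab)"
    by blast
  have "y \<in> P \<longleftrightarrow> a0 \<bullet> y \<le> a0 \<bullet> z" if "y \<in> ball z r" for y
  proof
    assume "y \<in> P" then show "a0 \<bullet> y \<le> a0 \<bullet> z" using Peq ab0 by blast
  next
    assume h: "a0 \<bullet> y \<le> a0 \<bullet> z"
    have "a \<bullet> y \<le> b" if "(a,b) \<in> C" for a b
    proof (cases "a \<bullet> z = b")
      case True then show ?thesis using act[OF that True] h by simp
    next
      case False
      then have "a \<bullet> z < b" using zle that by fastforce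
      then show ?thesis using r(2) that \<open>y \<in> ball z r\<close> by fastforce
    qed
    then show "y \<in> P" using Peq by blast
  qed
  then show ?thesis using a0 r(1) by blast
qed

lemma N0:
  assumes zP: "z \<in> P" and r: "r > 0" and loc: "\<forall>y\<in>ball z r. (y \<in> P \<longleftrightarrow> a \<bullet> y \<le> a \<bullet> z)"
    and pP: "p \<in> P"
  shows "a \<bullet> p \<le> a \<bullet> z"
proof (rule ccontr)
  assume "\<not> ?thesis"
  then have gt: "a \<bullet> p > a \<bullet> z" by simp
  define l where "l = r / (2 * (norm (p - z) + 1))"
  have n1: "norm (p - z) + 1 > 0" using norm_ge_zero[of "p - z"] by linarith
  have l0: "l > 0" using r n1 by (simp add: l_def)
  have "l * norm (p - z) < l * (norm (p - z) + 1)" using l0 by simp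
  also have "\<dots> = r / 2" using n1 by (simp add: l_def field_simps)
  finally have lr: "l * norm (p - z) < r/2" .
  have "l \<le> r / 2" using n1 r by (simp add: l_def divide_le_eq field_simps)
  define l' where "l' = min l 1"
  have l'0: "l' > 0" "l' \<le> 1" using l0 by (auto simp: l'_def)
  have "l' * norm (p - z) \<le> l * norm (p - z)" by (simp add: l'_def mult_right_mono)
  then have l'r: "l' * norm (p - z) < r" using lr r by linarith
  define m where "m = z + l' *\<^sub>R (p - z)"
  have "m = (1 - l') *\<^sub>R z + l' *\<^sub>R p" by (simp add: m_def algebra_simps)
  then have mP: "m \<in> P" using convexD[OF convP zP pP, of "1 - l'" l'] l'0 by simp
  have "dist z m < r" using l'r l'0 by (simp add: m_def dist_norm)
  then have "a \<bullet> m \<le> a \<bullet> z" using loc mP by auto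
  moreover have "a \<bullet> m = a \<bullet> z + l' * (a \<bullet> p - a \<bullet> z)" by (simp add: m_def inner_add_right inner_diff_right)
  moreover have "l' * (a \<bullet> p - a \<bullet> z) > 0" using l'0 gt by simp
  ultimately show False by linarith
qed

lemma N1:
  assumes zP: "z \<in> P" and r: "r > 0" and loc: "\<forall>y\<in>ball z r. (y \<in> P \<longleftrightarrow> a \<bullet> y \<le> a \<bullet> z)"
    and f: "f \<in> P" "a \<bullet> f = a \<bullet> z"
  shows "\<exists>d>0. z + d *\<^sub>R (z - f) \<in> P \<and> a \<bullet> (z + d *\<^sub>R (z - f)) = a \<bullet> z"
proof -
  define d where "d = r / (2 * (norm (z - f) + 1))"
  have n1: "norm (z - f) + 1 > 0" using norm_ge_zero[of "z - f"] by linarith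
  have d0: "d > 0" using r n1 by (simp add: d_def)
  have "d * norm (z - f) < d * (norm (z - f) + 1)" using d0 by simp
  also have "\<dots> = r / 2" using n1 by (simp add: d_def field_simps)
  finally have "d * norm (z - f) < r" using r by linarith
  then have "dist z (z + d *\<^sub>R (z - f)) < r" using d0 by (simp add: dist_norm)
  moreover have "a \<bullet> (z + d *\<^sub>R (z - f)) = a \<bullet> z" using f by (simp add: inner_add_right inner_diff_right)
  ultimately show ?thesis using loc d0 by auto
qed

lemma tile_clint: "x \<in> (+) t ` P \<Longrightarrow> x \<in> closure (interior ((+) t ` P))"
  by (simp add: int_tile closure_translation mem_transl P_clint)

lemma N3a:
  assumes zP: "z \<in> P" and r: "r > 0" and loc: "\<forall>y\<in>ball z r. (y \<in> P \<longleftrightarrow> a \<bullet> y \<le> a \<bullet> z)"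
    and ts: "t \<in> T" "s \<in> T" "s \<noteq> t" "t + z \<in> (+) s ` P" and q: "q \<in> (+) s ` P"
  shows "a \<bullet> (q - t) \<ge> a \<bullet> z"
proof (rule ccontr)
  assume "\<not> ?thesis"
  then have qlt: "a \<bullet> (q - t) < a \<bullet> z" by simp
  define O1 where "O1 = {y. a \<bullet> (y - t) < a \<bullet> z}"
  have oO1: "open O1"
  proof -
    have "O1 = {y. a \<bullet> y < a \<bullet> z + a \<bullet> t}" by (auto simp: O1_def inner_diff_right)
    then show ?thesis by (simp add: open_halfspace_lt)
  qed
  have "q \<in> O1" using qlt by (simp add: O1_def)
  moreover have "q \<in> closure (interior ((+) s ` P))" using tile_clint q by blast
  ultimately have "O1 \<inter> closure (interior ((+) s ` P)) \<noteq> {}" by blast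
  then have "O1 \<inter> interior ((+) s ` P) \<noteq> {}"
    using open_Int_closure_eq_empty[OF oO1, of "interior ((+) s ` P)"] by simp
  then obtain q' where q'0: "q' \<in> O1" "q' \<in> interior ((+) s ` P)" by blast
  then have q': "q' \<in> interior ((+) s ` P)" "a \<bullet> (q' - t) < a \<bullet> z" by (auto simp: O1_def)
  define x where "x = t + z"
  have xcl: "x \<in> closure ((+) s ` P)" unfolding x_def using ts(4) closure_subset by (rule subsetD[rotated])
  have seg: "open_segment q' x \<subseteq> interior ((+) s ` P)"
    by (rule in_interior_closure_convex_segment[OF convex_tile q'(1) xcl])
  have ax: "a \<bullet> (x - t) = a \<bullet> z" by (simp add: x_def)
  then have qx: "q' \<noteq> x" using q'(2) by auto
  define l where "l = min (1/2) (r / (2 * (norm (q' - x) + 1)))"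
  have n1: "norm (q' - x) + 1 > 0" using norm_ge_zero[of "q' - x"] by linarith
  have l0: "l > 0" "l < 1" using r n1 by (auto simp: l_def)
  have "l * norm (q' - x) \<le> (r / (2 * (norm (q' - x) + 1))) * norm (q' - x)"
    unfolding l_def by (rule mult_right_mono[OF min.cobounded2 norm_ge_zero])
  also have "\<dots> < (r / (2 * (norm (q' - x) + 1))) * (norm (q' - x) + 1)"
    using r n1 by (intro mult_strict_left_mono) auto
  also have "\<dots> = r / 2" using n1 by (simp add: field_simps)
  finally have lr: "l * norm (q' - x) < r" using r by linarith
  define m where "m = x + l *\<^sub>R (q' - x)"
  have "m = (1 - (1 - l)) *\<^sub>R q' + (1 - l) *\<^sub>R x" by (simp add: m_def algebra_simps)
  then have "m \<in> open_segment q' x" using qx l0 by (auto simp: in_segment intro!: exI[of _ "1 - l"])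
  then have mint_s: "m \<in> interior ((+) s ` P)" using seg by blast
  have am: "a \<bullet> (m - t) < a \<bullet> z"
  proof -
    have "a \<bullet> (m - t) = a \<bullet> (x - t) + l * (a \<bullet> (q' - t) - a \<bullet> (x - t))"
      by (simp add: m_def inner_add_right inner_diff_right algebra_simps)
    moreover have "l * (a \<bullet> (q' - t) - a \<bullet> (x - t)) < 0" using l0 q'(2) ax by (simp add: mult_pos_neg)
    ultimately show ?thesis using ax by linarith
  qed
  have dm: "dist x m < r" using lr l0 by (simp add: m_def dist_norm)
  define O2 where "O2 = ball x r \<inter> O1"
  have "open O2" using oO1 by (simp add: O2_def open_Int)
  moreover have "O2 \<subseteq> (+) t ` P"
  proof
    fix y assume "y \<in> O2"
    then have "dist x y < r" "a \<bullet> (y - t) < a \<bullet> z" by (auto simp: O2_def O1_def)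
    then have "dist z (y - t) < r" by (simp add: x_def dist_norm algebra_simps)
    then have "y - t \<in> P" using loc \<open>a \<bullet> (y - t) < a \<bullet> z\<close> by auto
    then show "y \<in> (+) t ` P" by (simp add: mem_transl)
  qed
  ultimately have "O2 \<subseteq> interior ((+) t ` P)" by (meson interior_maximal)
  moreover have "m \<in> O2" using dm am by (simp add: O2_def O1_def)
  ultimately have "m \<in> interior ((+) t ` P)" by blast
  then show False using disj[OF ts(1) ts(2)] ts(3) mint_s by blast
qed

lemma N3b:
  assumes zP: "z \<in> P" and r: "r > 0" and loc: "\<forall>y\<in>ball z r. (y \<in> P \<longleftrightarrow> a \<bullet> y \<le> a \<bullet> z)"
    and ts: "t \<in> T" "s \<in> T" "s \<noteq> t" "t + z \<in> (+) s ` P" and f: "f \<in> P" "a \<bullet> f = a \<bullet> z"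
  shows "t + f \<in> (+) s ` P"
proof (cases "f = z")
  case True then show ?thesis using ts by simp
next
  case False
  obtain d where d: "d > 0" "z + d *\<^sub>R (z - f) \<in> P" using N1[OF zP r loc f] by blast
  define f' where "f' = z + d *\<^sub>R (z - f)"
  have fc: "(+) t ` P \<inter> (+) s ` P face_of (+) t ` P" using f2f ts(1,2,3) by simp
  have e1: "1/(1+d) + d/(1+d) = 1" using d by (simp add: field_simps)
  have "(1 - 1/(1+d)) *\<^sub>R (t + f) + (1/(1+d)) *\<^sub>R (t + f') = 
     (1/(1+d)) *\<^sub>R t + ((1/(1+d)) *\<^sub>R z + ((d/(1+d)) *\<^sub>R t + (d/(1+d)) *\<^sub>R z))"
    using d(1) by (simp add: f'_def field_simps scaleR_add_right scaleR_diff_right algebra_simps)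
  also have "\<dots> = (1/(1+d) + d/(1+d)) *\<^sub>R t + (1/(1+d) + d/(1+d)) *\<^sub>R z"
    by (simp add: scaleR_add_left algebra_simps)
  also have "\<dots> = t + z" using e1 by simp
  finally have "t + z = (1 - 1/(1+d)) *\<^sub>R (t + f) + (1/(1+d)) *\<^sub>R (t + f')" by simp
  moreover have "t + f \<noteq> t + f'"
  proof
    assume "t + f = t + f'"
    then have "(1 + d) *\<^sub>R (z - f) = 0" by (simp add: f'_def algebra_simps)
    then show False using d(1) False by simp
  qed
  moreover have "0 < 1/(1+d)" "1/(1+d) < 1" using d(1) by auto
  ultimately have seg: "t + z \<in> open_segment (t + f) (t + f')"
    unfolding in_segment by (intro conjI exI[of _ "1/(1+d)"]) auto
  have m1: "t + f \<in> (+) t ` P" "t + f' \<in> (+) t ` P" "t + z \<in> (+) t ` P \<inter> (+) s ` P"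
    using f d zP ts(4) by (auto simp: f'_def mem_transl)
  have "\<forall>a\<in>(+) t ` P. \<forall>b\<in>(+) t ` P. \<forall>x\<in>(+) t ` P \<inter> (+) s ` P. x \<in> open_segment a b \<longrightarrow>
          a \<in> (+) t ` P \<inter> (+) s ` P \<and> b \<in> (+) t ` P \<inter> (+) s ` P"
    using fc unfolding face_of_def by (elim conjE) assumption
  from this[rule_format, OF m1(1) m1(2) m1(3) seg] show ?thesis by simp
qed

lemma N3:
  assumes zP: "z \<in> P" and r: "r > 0" and loc: "\<forall>y\<in>ball z r. (y \<in> P \<longleftrightarrow> a \<bullet> y \<le> a \<bullet> z)"
    and ts: "t \<in> T" "s \<in> T" "s \<noteq> t" "t + z \<in> (+) s ` P" and f: "f \<in> P" "a \<bullet> f = a \<bullet> z"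
  shows "(s - t) - f \<in> P \<and> a \<bullet> ((s - t) - f) = a \<bullet> z"
proof -
  have "s + (- z) \<in> (+) s ` P" using symP[OF zP] by (simp add: mem_transl)
  then have "a \<bullet> (s + (- z) - t) \<ge> a \<bullet> z" using N3a[OF zP r loc ts] by blast
  then have lo: "a \<bullet> (s - t) \<ge> 2 * (a \<bullet> z)" by (simp add: inner_diff_right inner_add_right)
  have "t + z - s \<in> P" using ts(4) by (simp add: mem_transl)
  then have "- (t + z - s) \<in> P" using symP by blast
  then have "a \<bullet> (- (t + z - s)) \<le> a \<bullet> z" using N0[OF zP r loc] by blast
  then have hi: "a \<bullet> (s - t) \<le> 2 * (a \<bullet> z)" by (simp add: inner_diff_right inner_add_right)
  have "t + f \<in> (+) s ` P" using N3b[OF zP r loc ts f] .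
  then have "t + f - s \<in> P" by (simp add: mem_transl)
  then have "- (t + f - s) \<in> P" using symP by blast
  moreover have "- (t + f - s) = (s - t) - f" by (simp add: algebra_simps)
  moreover have "a \<bullet> ((s - t) - f) = a \<bullet> z" using lo hi f(2) by (simp add: inner_diff_right)
  ultimately show ?thesis by metis
qed

lemma N2:
  assumes zP: "z \<in> P" and r: "r > 0" and loc: "\<forall>y\<in>ball z r. (y \<in> P \<longleftrightarrow> a \<bullet> y \<le> a \<bullet> z)"
    and a: "a \<noteq> 0" and t: "t \<in> T"
  shows "\<exists>s\<in>T. s \<noteq> t \<and> t + z \<in> (+) s ` P"
proof -
  obtain \<rho> where \<rho>: "\<rho> > 0" "\<forall>s\<in>T. (+) s ` P \<inter> ball (t + z) \<rho> \<noteq> {} \<longrightarrow> t + z \<in> (+) s ` P"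
    using LF2 by blast
  define y where "y = t + z + (\<rho> / 2 / norm a) *\<^sub>R a"
  have "dist (t + z) y = \<rho> / 2" using a \<rho> by (simp add: y_def dist_norm)
  then have yb: "y \<in> ball (t + z) \<rho>" using \<rho> by simp
  have "a \<bullet> (y - t) = a \<bullet> z + (\<rho> / 2 / norm a) * (a \<bullet> a)" by (simp add: y_def inner_add_right)
  moreover have "(\<rho> / 2 / norm a) * (a \<bullet> a) > 0" using a \<rho> by (intro mult_pos_pos divide_pos_pos) auto
  ultimately have "a \<bullet> (y - t) > a \<bullet> z" by linarith
  then have "y - t \<notin> P" using N0[OF zP r loc] by force
  then have ynt: "y \<notin> (+) t ` P" by (simp add: mem_transl)
  obtain s where s: "s \<in> T" "y \<in> (+) s ` P" using cover by blast
  then have "s \<noteq> t" using ynt by blast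
  moreover have "t + z \<in> (+) s ` P" using \<rho>(2) s yb by blast
  ultimately show ?thesis using s by blast
qed

lemma transl_unique:
  assumes zP: "z \<in> P" and za: "a \<bullet> z = h"
    and w: "\<forall>f. f \<in> P \<and> a \<bullet> f = h \<longrightarrow> w - f \<in> P \<and> a \<bullet> (w - f) = h"
    and w': "\<forall>f. f \<in> P \<and> a \<bullet> f = h \<longrightarrow> w' - f \<in> P \<and> a \<bullet> (w' - f) = h"
  shows "w = w'"
proof -
  define d where "d = w' - w"
  have step: "f + d \<in> P \<and> a \<bullet> (f + d) = h" if "f \<in> P" "a \<bullet> f = h" for f
  proof -
    have "w - f \<in> P \<and> a \<bullet> (w - f) = h" using w that by blast
    then have "w' - (w - f) \<in> P \<and> a \<bullet> (w' - (w - f)) = h" using w' by blast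
    moreover have "w' - (w - f) = f + d" by (simp add: d_def algebra_simps)
    ultimately show ?thesis by simp
  qed
  have k: "z + of_nat k *\<^sub>R d \<in> P \<and> a \<bullet> (z + of_nat k *\<^sub>R d) = h" for k
  proof (induction k)
    case 0 then show ?case using zP za by simp
  next
    case (Suc k)
    then have "z + of_nat k *\<^sub>R d + d \<in> P \<and> a \<bullet> (z + of_nat k *\<^sub>R d + d) = h" using step by blast
    moreover have "z + of_nat k *\<^sub>R d + d = z + of_nat (Suc k) *\<^sub>R d" by (simp add: algebra_simps)
    ultimately show ?case by simp
  qed
  obtain R where R: "\<forall>x\<in>P. norm x \<le> R" using boundedP bounded_pos by blast
  show ?thesis
  proof (rule ccontr)
    assume "w \<noteq> w'"
    then have dn: "norm d > 0" by (simp add: d_def)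
    obtain k :: nat where k1: "of_nat k > (R + norm z) / norm d" using reals_Archimedean2 by blast
    have "norm (z + of_nat k *\<^sub>R d) \<le> R" using R k by blast
    moreover have "norm (of_nat k *\<^sub>R d) \<le> norm (z + of_nat k *\<^sub>R d) + norm z"
      using norm_triangle_ineq4[of "z + of_nat k *\<^sub>R d" z] by simp
    ultimately have "of_nat k * norm d \<le> R + norm z" by simp
    moreover have "of_nat k * norm d > R + norm z" using k1 dn by (simp add: divide_less_eq)
    ultimately show False by linarith
  qed
qed

lemma Neighbor:
  assumes zP: "z \<in> P" and r: "r > 0" and loc: "\<forall>y\<in>ball z r. (y \<in> P \<longleftrightarrow> a \<bullet> y \<le> a \<bullet> z)"
    and a: "a \<noteq> 0"
  shows "\<exists>w. (\<forall>t\<in>T. t + w \<in> T) \<and> (\<forall>t\<in>T. \<forall>s\<in>T. s \<noteq> t \<and> t + z \<in> (+) s ` P \<longrightarrow> s = t + w)"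
proof -
  obtain t0 where t0: "t0 \<in> T" using cover by blast
  obtain s0 where s0: "s0 \<in> T" "s0 \<noteq> t0" "t0 + z \<in> (+) s0 ` P" using N2[OF zP r loc a t0] by blast
  define w where "w = s0 - t0"
  have Qw: "\<forall>f. f \<in> P \<and> a \<bullet> f = a \<bullet> z \<longrightarrow> w - f \<in> P \<and> a \<bullet> (w - f) = a \<bullet> z"
    using N3[OF zP r loc t0 s0] by (simp add: w_def)
  have uniq: "s = t + w" if "t \<in> T" "s \<in> T" "s \<noteq> t" "t + z \<in> (+) s ` P" for t s
  proof -
    have "\<forall>f. f \<in> P \<and> a \<bullet> f = a \<bullet> z \<longrightarrow> (s - t) - f \<in> P \<and> a \<bullet> ((s - t) - f) = a \<bullet> z"
      using N3[OF zP r loc that] by blast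
    then have "s - t = w" using transl_unique[OF zP refl _ Qw] by blast
    then show ?thesis by (simp add: algebra_simps)
  qed
  have "t + w \<in> T" if tT: "t \<in> T" for t
  proof -
    obtain s where s: "s \<in> T" "s \<noteq> t" "t + z \<in> (+) s ` P" using N2[OF zP r loc a tT] by blast
    then show ?thesis using uniq[OF tT s] by simp
  qed
  then show ?thesis using uniq by blast
qed


definition "LL = {v. \<forall>t\<in>T. t + v \<in> T}"

lemma LL_zero: "0 \<in> LL" by (simp add: LL_def)
lemma LL_add: "u \<in> LL \<Longrightarrow> v \<in> LL \<Longrightarrow> u + v \<in> LL"
  by (simp add: LL_def) (metis add.assoc)
lemma LL_neg: assumes v: "v \<in> LL" shows "- v \<in> LL"
proof -
  have "t - v \<in> T" if tT: "t \<in> T" for t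
  proof -
    obtain s where s: "s \<in> T" "t - v \<in> (+) s ` P" using cover by blast
    have sv: "s + v \<in> T" using v s(1) by (simp add: LL_def)
    have e: "t - (s + v) = t - v - s" by (simp add: algebra_simps)
    have "t \<in> (+) (s + v) ` P" using s(2) unfolding mem_transl e .
    moreover have "t \<in> interior ((+) t ` P)" using zero_int by (simp add: int_tile mem_transl)
    ultimately have "s + v = t" using tile_unique[OF sv tT] by blast
    then show ?thesis using s(1) by (metis add_diff_cancel)
  qed
  then show ?thesis by (simp add: LL_def)
qed

lemma neg_hyps:
  assumes "finite I" "\<And>i. i \<in> I \<Longrightarrow> c i \<noteq> 0"
  shows "negligible (\<Union>i\<in>I. {y. c i \<bullet> y = k i})"
  using assms by (intro negligible_Union) (auto intro!: negligible_hyperplane)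

lemma avoid_negl:
  assumes "open S" "S \<noteq> {}" "negligible N"
  shows "\<exists>x\<in>S. x \<notin> N"
proof (rule ccontr)
  assume "\<not> ?thesis"
  then have "S \<subseteq> N" by blast
  then have "negligible S" using assms(3) negligible_subset by blast
  then show False using open_not_negligible assms by blast
qed

lemma covering:
  assumes t0: "t0 \<in> T"
  shows "(\<Union>v\<in>LL. (+) (t0 + v) ` P) = UNIV"
proof (rule ccontr)
  define U where "U = (\<Union>v\<in>LL. (+) (t0 + v) ` P)"
  assume "\<not> ?thesis"
  then obtain y0 where y0: "y0 \<notin> U" unfolding U_def by blast
  have tv: "t0 + v \<in> T" if "v \<in> LL" for v using that t0 by (simp add: LL_def)
  have "\<exists>e>0. ball y e \<subseteq> - U" if "y \<in> - U" for y
  proof -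
    obtain \<rho> where \<rho>: "\<rho> > 0" "\<forall>t\<in>T. (+) t ` P \<inter> ball y \<rho> \<noteq> {} \<longrightarrow> y \<in> (+) t ` P"
      using LF2 by blast
    have "ball y \<rho> \<subseteq> - U"
    proof
      fix p assume p: "p \<in> ball y \<rho>"
      show "p \<in> - U"
      proof
        assume "p \<in> U"
        then obtain v where v: "v \<in> LL" "p \<in> (+) (t0 + v) ` P" unfolding U_def by blast
        then have "y \<in> (+) (t0 + v) ` P" using \<rho>(2) tv[OF v(1)] p by blast
        then show False using that v(1) unfolding U_def by blast
      qed
    qed
    then show ?thesis using \<rho>(1) by blast
  qed
  then have oU: "open (- U)" by (simp add: open_contains_ball)
  obtain \<rho> where \<rho>: "\<rho> > 0" "ball y0 \<rho> \<subseteq> - U" using oU y0 open_contains_ball by blast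
  obtain r0 where r0: "r0 > 0" "ball 0 r0 \<subseteq> interior P" using ball_int by blast
  have bt0: "ball t0 r0 \<subseteq> interior U"
  proof -
    have "ball t0 r0 \<subseteq> (+) t0 ` P"
    proof
      fix p assume "p \<in> ball t0 r0"
      then have "p - t0 \<in> ball 0 r0" by (simp add: dist_norm norm_minus_commute)
      then have "p - t0 \<in> interior P" using r0(2) by blast
      then show "p \<in> (+) t0 ` P" using interior_subset by (auto simp: mem_transl)
    qed
    also have "\<dots> \<subseteq> U" unfolding U_def using LL_zero by force
    finally show ?thesis by (meson interior_maximal open_ball)
  qed
  define R where "R = norm t0 + r0 + norm y0 + \<rho>"
  define K where "K = cball (0::'a) R"
  have nd: "norm p \<le> norm c + dist c p" for p c :: 'a
    using norm_triangle_ineq[of c "p - c"] by (simp add: dist_norm norm_minus_commute)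
  have Kb: "ball t0 r0 \<subseteq> K" "ball y0 \<rho> \<subseteq> K"
  proof -
    show "ball t0 r0 \<subseteq> K"
    proof
      fix p assume "p \<in> ball t0 r0"
      then have "norm p \<le> norm t0 + r0" using nd[of p t0] by simp
      then show "p \<in> K" using \<rho>(1) norm_ge_zero[of y0] unfolding K_def R_def mem_cball_0 by linarith
    qed
    show "ball y0 \<rho> \<subseteq> K"
    proof
      fix p assume "p \<in> ball y0 \<rho>"
      then have "norm p \<le> norm y0 + \<rho>" using nd[of p y0] by simp
      then show "p \<in> K" using r0(1) norm_ge_zero[of t0] unfolding K_def R_def mem_cball_0 by linarith
    qed
  qed
  define S where "S = {t\<in>T. (+) t ` P \<inter> K \<noteq> {}}"
  have finS: "finite S" unfolding S_def K_def by (rule LF1) simp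
  define H1 where "H1 = (\<Union>i\<in>S \<times> C. {y. fst (snd i) \<bullet> y = snd (snd i) + fst (snd i) \<bullet> fst i})"
  have "negligible H1" unfolding H1_def
    by (rule neg_hyps) (use finS finC Cnz in auto)
  then obtain x where x: "x \<in> ball t0 r0" "x \<notin> H1" using avoid_negl[of "ball t0 r0" H1] r0 by auto
  define cc where "cc = (\<lambda>i::'a \<times> ('a \<times> real) \<times> ('a \<times> real).
      (snd (snd (snd i)) - fst (snd (snd i)) \<bullet> (x - fst i)) *\<^sub>R fst (fst (snd i))
      - (snd (fst (snd i)) - fst (fst (snd i)) \<bullet> (x - fst i)) *\<^sub>R fst (snd (snd i)))"
  define I2 where "I2 = {i \<in> S \<times> C \<times> C. \<not> (\<exists>c. fst (snd (snd i)) = c *\<^sub>R fst (fst (snd i)))}"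
  define H2 where "H2 = (\<Union>i\<in>I2. {y. cc i \<bullet> y = cc i \<bullet> x})"
  have "cc i \<noteq> 0" if "i \<in> I2" for i
  proof -
    obtain t a b a' b' where i: "i = (t, (a, b), (a', b'))" by (metis prod.collapse)
    have ind: "\<not> (\<exists>c. a' = c *\<^sub>R a)" and tS: "t \<in> S" and ab: "(a,b) \<in> C"
      using that by (auto simp: I2_def i)
    have "x \<notin> {y. a \<bullet> y = b + a \<bullet> t}" using x(2) tS ab unfolding H1_def by force
    then have \<beta>: "b - a \<bullet> (x - t) \<noteq> 0" by (simp add: inner_diff_right)
    define \<alpha> where "\<alpha> = b' - a' \<bullet> (x - t)"
    define \<beta>' where "\<beta>' = b - a \<bullet> (x - t)"
    show ?thesis
    proof
      assume "cc i = 0"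
      then have eq: "\<alpha> *\<^sub>R a = \<beta>' *\<^sub>R a'" by (simp add: cc_def i \<alpha>_def \<beta>'_def)
      have "a' = (1/\<beta>') *\<^sub>R (\<beta>' *\<^sub>R a')" using \<beta> by (simp add: \<beta>'_def)
      also have "\<dots> = (1/\<beta>') *\<^sub>R (\<alpha> *\<^sub>R a)" using eq by simp
      also have "\<dots> = (\<alpha>/\<beta>') *\<^sub>R a" by simp
      finally show False using ind by blast
    qed
  qed
  then have ccnz: "\<And>i. i \<in> I2 \<Longrightarrow> cc i \<noteq> 0" by blast
  have finI2: "finite I2" unfolding I2_def using finS finC by (auto intro: finite_subset)
  have "negligible H2" unfolding H2_def by (rule neg_hyps[OF finI2 ccnz])
  then obtain y where y: "y \<in> ball y0 \<rho>" "y \<notin> H2" using avoid_negl[of "ball y0 \<rho>" H2] \<rho>(1) by auto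
  have xU: "x \<in> interior U" using bt0 x(1) by blast
  have yU: "y \<in> - U" using \<rho>(2) y(1) by blast
  have "\<exists>z\<in>closed_segment x y. z \<in> U \<and> z \<notin> interior U"
  proof (rule ccontr)
    assume "\<not> ?thesis"
    then have "closed_segment x y \<subseteq> interior U \<union> - U" by blast
    moreover have "interior U \<inter> - U \<inter> closed_segment x y = {}" using interior_subset by blast
    ultimately have "interior U \<inter> closed_segment x y = {} \<or> - U \<inter> closed_segment x y = {}"
      using connectedD[OF connected_segment open_interior oU] by blast
    then show False using xU yU by auto
  qed
  then obtain z where zseg: "z \<in> closed_segment x y" and zU: "z \<in> U" and zi: "z \<notin> interior U" by blast
  obtain u where u: "0 \<le> u" "u \<le> 1" "z = (1 - u) *\<^sub>R x + u *\<^sub>R y" using zseg by (auto simp: in_segment)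
  have "z \<noteq> x" using xU zi by blast
  then have u0: "u \<noteq> 0" using u by auto
  have zmx: "z - x = u *\<^sub>R (y - x)" using u(3) by (simp add: algebra_simps)
  have "closed_segment x y \<subseteq> K" using Kb x(1) y(1) convex_cball unfolding K_def
    by (meson closed_segment_subset ball_subset_cball subsetD)
  then have zK: "z \<in> K" using zseg by blast
  obtain v where v: "v \<in> LL" "z \<in> (+) (t0 + v) ` P" using zU unfolding U_def by blast
  define t where "t = t0 + v"
  have tT: "t \<in> T" using tv[OF v(1)] by (simp add: t_def)
  have tS: "t \<in> S" using tT v(2) zK unfolding S_def t_def by blast
  define z' where "z' = z - t"
  have z'P: "z' \<in> P" using v(2) by (simp add: z'_def t_def mem_transl)
  have tU: "(+) t ` P \<subseteq> U" unfolding U_def t_def using v(1) by blast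
  have z'i: "z' \<notin> interior P"
  proof
    assume "z' \<in> interior P"
    then have "z \<in> interior ((+) t ` P)" by (simp add: int_tile mem_transl z'_def)
    then show False using zi interior_mono[OF tU] by blast
  qed
  have nb: "\<exists>c. a' = c *\<^sub>R a" if ab: "(a,b) \<in> C" "(a',b') \<in> C" "a \<bullet> z' = b" "a' \<bullet> z' = b'" for a b a' b'
  proof (rule ccontr)
    assume nc: "\<not> (\<exists>c. a' = c *\<^sub>R a)"
    define i where "i = (t, (a, b), (a', b'))"
    have iI: "i \<in> I2" using tS ab nc by (simp add: I2_def i_def)
    have e1: "a \<bullet> (z - x) = b - a \<bullet> (x - t)" using ab(3) by (simp add: z'_def inner_diff_right)
    have e2: "a' \<bullet> (z - x) = b' - a' \<bullet> (x - t)" using ab(4) by (simp add: z'_def inner_diff_right)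
    have "cc i \<bullet> (z - x) = 0" by (simp add: cc_def i_def inner_diff_left e1 e2)
    then have "u * (cc i \<bullet> (y - x)) = 0" by (simp add: zmx)
    then have "cc i \<bullet> y = cc i \<bullet> x" using u0 by (simp add: inner_diff_right)
    then have "y \<in> H2" using iI unfolding H2_def by blast
    then show False using y(2) by blast
  qed
  have "\<exists>a r. a \<noteq> 0 \<and> r > 0 \<and> (\<forall>y\<in>ball z' r. y \<in> P \<longleftrightarrow> a \<bullet> y \<le> a \<bullet> z')"
    apply (rule regular[OF z'P z'i]) using nb by blast
  then obtain a r where ar: "a \<noteq> 0" "r > 0" "\<forall>y\<in>ball z' r. y \<in> P \<longleftrightarrow> a \<bullet> y \<le> a \<bullet> z'"
    by blast
  obtain w where w: "\<forall>t\<in>T. t + w \<in> T" "\<forall>t\<in>T. \<forall>s\<in>T. s \<noteq> t \<and> t + z' \<in> (+) s ` P \<longrightarrow> s = t + w"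
    using Neighbor[OF z'P ar(2) ar(3) ar(1)] by blast
  have wL: "w \<in> LL" using w(1) by (simp add: LL_def)
  obtain \<rho>' where \<rho>': "\<rho>' > 0" "\<forall>s\<in>T. (+) s ` P \<inter> ball z \<rho>' \<noteq> {} \<longrightarrow> z \<in> (+) s ` P"
    using LF2 by blast
  have "ball z \<rho>' \<subseteq> U"
  proof
    fix p assume p: "p \<in> ball z \<rho>'"
    obtain s where s: "s \<in> T" "p \<in> (+) s ` P" using cover by blast
    then have zs: "z \<in> (+) s ` P" using \<rho>'(2) p by blast
    show "p \<in> U"
    proof (cases "s = t")
      case True then show ?thesis using s(2) tU by blast
    next
      case False
      have "t + z' = z" by (simp add: z'_def)
      then have "s = t + w" using w(2) tT s(1) False zs by metis
      then have "s = t0 + (v + w)" by (simp add: t_def add.assoc)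
      moreover have "v + w \<in> LL" using LL_add[OF v(1) wL] .
      ultimately show ?thesis using s(2) unfolding U_def by blast
    qed
  qed
  then have "z \<in> interior U" using \<rho>'(1) by (meson centre_in_ball interior_maximal open_ball subsetD)
  then show False using zi by blast
qed

lemma T_ne: "\<exists>t0. t0 \<in> T" using cover by blast

lemma T_LL: assumes "t0 \<in> T" "t \<in> T" shows "t - t0 \<in> LL"
proof -
  have "t \<in> (\<Union>v\<in>LL. (+) (t0 + v) ` P)" using covering[OF assms(1)] by simp
  then obtain v where v: "v \<in> LL" "t \<in> (+) (t0 + v) ` P" by blast
  have "t0 + v \<in> T" using v(1) assms(1) by (simp add: LL_def)
  moreover have "t \<in> interior ((+) t ` P)" using zero_int by (simp add: int_tile mem_transl)
  ultimately have "t0 + v = t" using tile_unique assms(2) v(2) by blast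
  then show ?thesis using v(1) by (metis add_diff_cancel_left')
qed

lemma LL_pack:
  assumes u: "u \<in> LL" "u \<noteq> 0"
  shows "interior ((+) u ` P) \<inter> interior P = {}"
proof (rule ccontr)
  assume "\<not> ?thesis"
  then obtain p where p0: "p \<in> interior ((+) u ` P)" "p \<in> interior P" by blast
  then have p: "p - u \<in> interior P" "p \<in> interior P" by (simp_all add: int_tile mem_transl)
  obtain t0 where t0: "t0 \<in> T" using T_ne by blast
  have t1: "t0 + u \<in> T" using u t0 by (simp add: LL_def)
  have e: "t0 + p - (t0 + u) = p - u" by (simp add: algebra_simps)
  have "t0 + p \<in> interior ((+) (t0 + u) ` P)" unfolding int_tile mem_transl e using p(1) .
  moreover have "t0 + p \<in> interior ((+) t0 ` P)" using p(2) by (simp add: int_tile mem_transl)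
  moreover have "t0 + u \<noteq> t0" using u(2) by simp
  ultimately show False using disj[OF t1 t0] by blast
qed

lemma LL_cover: "\<exists>l\<in>LL. x \<in> (+) l ` P"
proof -
  obtain t0 where t0: "t0 \<in> T" using T_ne by blast
  have "t0 + x \<in> (\<Union>v\<in>LL. (+) (t0 + v) ` P)" using covering[OF t0] by simp
  then obtain v where "v \<in> LL" "t0 + x \<in> (+) (t0 + v) ` P" by blast
  then show ?thesis by (rule_tac x=v in bexI) (auto simp: mem_transl)
qed

lemma LL_lf:
  assumes "bounded B"
  shows "finite {l\<in>LL. (+) l ` P \<inter> B \<noteq> {}}"
proof -
  obtain t0 where t0: "t0 \<in> T" using T_ne by blast
  have fin: "finite {t\<in>T. (+) t ` P \<inter> (+) t0 ` B \<noteq> {}}"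
    using LF1 assms bounded_translation by blast
  have "{l\<in>LL. (+) l ` P \<inter> B \<noteq> {}} \<subseteq> (\<lambda>t. t - t0) ` {t\<in>T. (+) t ` P \<inter> (+) t0 ` B \<noteq> {}}"
  proof
    fix l assume "l \<in> {l\<in>LL. (+) l ` P \<inter> B \<noteq> {}}"
    then obtain q where l: "l \<in> LL" "q \<in> (+) l ` P" "q \<in> B" by blast
    have "t0 + l \<in> T" using l(1) t0 by (simp add: LL_def)
    moreover have "t0 + q \<in> (+) (t0 + l) ` P" using l(2) by (simp add: mem_transl)
    moreover have "t0 + q \<in> (+) t0 ` B" using l(3) by blast
    ultimately have "t0 + l \<in> {t\<in>T. (+) t ` P \<inter> (+) t0 ` B \<noteq> {}}" by blast
    then show "l \<in> (\<lambda>t. t - t0) ` {t\<in>T. (+) t ` P \<inter> (+) t0 ` B \<noteq> {}}"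
      by (rule rev_image_eqI) simp
  qed
  then show ?thesis using fin finite_subset by blast
qed

lemma dir_exists: "\<exists>d. \<forall>(a,b)\<in>C. a \<bullet> d \<noteq> 0"
proof -
  have neg: "negligible (\<Union>i\<in>C. {y. fst i \<bullet> y = 0})"
    using neg_hyps[OF finC, of fst "\<lambda>_. 0"] Cnz by force
  obtain d where d: "d \<notin> (\<Union>i\<in>C. {y. fst i \<bullet> y = 0})"
    using avoid_negl[OF open_UNIV UNIV_not_empty neg] by blast
  show ?thesis by (rule exI[of _ d]) (use d in fastforce)
qed

lemma tile_choice:
  assumes d: "\<forall>(a,b)\<in>C. a \<bullet> d \<noteq> 0"
  shows "\<exists>t\<in>T. \<exists>e>0. \<forall>\<epsilon>. 0 < \<epsilon> \<and> \<epsilon> \<le> e \<longrightarrow> X + \<epsilon> *\<^sub>R d \<in> interior ((+) t ` P)"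
proof -
  define S where "S = {t\<in>T. (+) t ` P \<inter> cball X (norm d) \<noteq> {}}"
  have finS: "finite S" unfolding S_def by (rule LF1) simp
  define rt where "rt = (\<lambda>i::'a \<times> ('a \<times> real). (snd (snd i) - fst (snd i) \<bullet> (X - fst i)) / (fst (snd i) \<bullet> d))"
  have "\<exists>e>0. \<forall>i\<in>S \<times> C. \<forall>e'. 0 < e' \<and> e' \<le> e \<longrightarrow> (rt i > 0 \<longrightarrow> e' < rt i)"
  proof (rule finite_min_pos)
    show "finite (S \<times> C)" using finS finC by simp
  next
    fix i
    show "\<exists>e>0. \<forall>e'. 0 < e' \<and> e' \<le> e \<longrightarrow> (rt i > 0 \<longrightarrow> e' < rt i)"
    proof (cases "rt i > 0")
      case True then show ?thesis by (rule_tac x="rt i / 2" in exI) auto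
    next
      case False then show ?thesis by (rule_tac x=1 in exI) auto
    qed
  qed
  then obtain e0 where e0: "e0 > 0" "\<forall>i\<in>S \<times> C. rt i > 0 \<longrightarrow> min e0 1 < rt i"
    by (meson min.cobounded1 min_less_iff_conj zero_less_one)
  define e where "e = min e0 1"
  have e: "e > 0" "e \<le> 1" using e0 by (auto simp: e_def)
  have eS: "\<forall>i\<in>S \<times> C. rt i > 0 \<longrightarrow> e < rt i" using e0 by (simp add: e_def)
  obtain t where t: "t \<in> T" "X + e *\<^sub>R d \<in> (+) t ` P" using cover by blast
  have "dist X (X + e *\<^sub>R d) = e * norm d" using e by (simp add: dist_norm)
  also have "\<dots> \<le> 1 * norm d" using e(2) by (rule mult_right_mono) simp
  finally have "X + e *\<^sub>R d \<in> cball X (norm d)" by simp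
  then have "(+) t ` P \<inter> cball X (norm d) \<noteq> {}" using t(2) by blast
  then have tS: "t \<in> S" using t(1) unfolding S_def by blast
  have "X + \<epsilon> *\<^sub>R d \<in> interior ((+) t ` P)" if \<epsilon>: "0 < \<epsilon>" "\<epsilon> \<le> e" for \<epsilon>
  proof -
    have "a \<bullet> (X + \<epsilon> *\<^sub>R d - t) < b" if ab: "(a,b) \<in> C" for a b
    proof (rule ccontr)
      assume nlt: "\<not> a \<bullet> (X + \<epsilon> *\<^sub>R d - t) < b"
      have ad: "a \<bullet> d \<noteq> 0" using d ab by blast
      define \<rho> where "\<rho> = (b - a \<bullet> (X - t)) / (a \<bullet> d)"
      have \<rho>i: "rt (t, (a, b)) = \<rho>" by (simp add: rt_def \<rho>_def)
      have g: "a \<bullet> (X + s *\<^sub>R d - t) - b = (s - \<rho>) * (a \<bullet> d)" for s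
        using ad by (simp add: \<rho>_def inner_add_right inner_diff_right field_simps)
      have "X + e *\<^sub>R d - t \<in> P" using t(2) by (simp add: mem_transl)
      then have ge: "a \<bullet> (X + e *\<^sub>R d - t) \<le> b" using ab Peq by blast
      then have g1: "(e - \<rho>) * (a \<bullet> d) \<le> 0" using g[of e] by linarith
      have g2: "(\<epsilon> - \<rho>) * (a \<bullet> d) \<ge> 0" using g[of \<epsilon>] nlt by linarith
      have iSC: "(t, (a, b)) \<in> S \<times> C" using tS ab by simp
      show False
      proof (cases "a \<bullet> d > 0")
        case True
        then have "e \<le> \<rho>" "\<epsilon> \<ge> \<rho>" using g1 g2 by (auto simp: mult_le_0_iff zero_le_mult_iff)
        then have "\<rho> > 0" "e < \<rho>" using \<epsilon> eS iSC \<rho>i by force+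
        then show False using \<open>\<epsilon> \<ge> \<rho>\<close> \<epsilon> by linarith
      next
        case False
        then have neg: "a \<bullet> d < 0" using ad by linarith
        then have "e \<ge> \<rho>" "\<epsilon> \<le> \<rho>" using g1 g2 by (auto simp: mult_le_0_iff zero_le_mult_iff)
        then have "\<rho> > 0" using \<epsilon> by linarith
        then have "e < \<rho>" using eS iSC \<rho>i by force
        then show False using \<open>e \<ge> \<rho>\<close> by linarith
      qed
    qed
    then have "X + \<epsilon> *\<^sub>R d - t \<in> interior P" using strict_int by blast
    then show ?thesis by (simp add: int_tile mem_transl)
  qed
  then show ?thesis using t(1) e(1) by blast
qed


lemma LL_diff: assumes "u \<in> LL" "v \<in> LL" shows "u - v \<in> LL"
  using LL_add[OF assms(1) LL_neg[OF assms(2)]] by simp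

lemma LL_two: assumes "u \<in> LL" shows "2 *\<^sub>R u \<in> LL"
  using LL_add[OF assms assms] by (simp add: scaleR_2)

lemma count_classes:
  assumes R: "finite R" "R \<subseteq> LL"
    and ineq: "\<And>u u'. u \<in> R \<Longrightarrow> u' \<in> R \<Longrightarrow> u \<noteq> u' \<Longrightarrow> \<not> (\<exists>l\<in>LL. u - u' = 2 *\<^sub>R l)"
  shows "card R \<le> 2 ^ DIM('a)"
proof -
  define Q where "Q = interior P"
  have Qm: "Q \<in> lmeasurable" unfolding Q_def by (rule lmeasurable_interior[OF boundedP])
  have Qne: "Q \<noteq> {}" using intP by (simp add: Q_def)
  have "\<not> negligible Q" using open_not_negligible[OF _ Qne] by (simp add: Q_def)
  then have \<mu>pos: "measure lebesgue Q > 0"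
    using negligible_iff_measure0[OF Qm] measure_nonneg[of lebesgue Q] by linarith
  have \<mu>P: "measure lebesgue P = measure lebesgue Q"
    unfolding Q_def using measure_interior[OF boundedP negligible_convex_frontier[OF convP]] by simp
  define Bh where "Bh = (\<lambda>x. (1/2) *\<^sub>R x) ` Q"
  define B where "B = (\<lambda>u. (+) ((1/2) *\<^sub>R u) ` Bh)"
  have Bh_open: "open Bh" unfolding Bh_def Q_def by (rule open_scaling) auto
  have Bh_bdd: "bounded Bh" unfolding Bh_def Q_def by (rule bounded_scaling[OF bounded_interior[OF boundedP]])
  have B_open: "open (B u)" for u unfolding B_def using Bh_open open_translation by blast
  have B_bdd: "bounded (B u)" for u unfolding B_def using Bh_bdd bounded_translation by blast
  have Bm: "B u \<in> lmeasurable" for u using lmeasurable_open[OF B_bdd B_open] .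
  have mBh: "measure lebesgue Bh = (1/2) ^ DIM('a) * measure lebesgue Q"
    using measure_lebesgue_affine[of "1/2" 0 Q] by (simp add: Bh_def)
  have mB: "measure lebesgue (B u) = (1/2) ^ DIM('a) * measure lebesgue Q" for u
    using measure_translation[of "(1/2) *\<^sub>R u" Bh] mBh by (simp add: B_def)
  define G where "G = (\<lambda>u. {l\<in>LL. (+) l ` P \<inter> B u \<noteq> {}})"
  have finG: "finite (G u)" for u unfolding G_def using LL_lf[OF B_bdd] .
  define pc where "pc = (\<lambda>(u, l). (+) (- l) ` (B u \<inter> (+) l ` P))"
  have Pm: "P \<in> lmeasurable" using lmeasurable_compact[OF cptP] .
  have tPm: "(+) l ` P \<in> lmeasurable" for l using measurable_translation[OF Pm] .
  have BtPm: "B u \<inter> (+) l ` P \<in> lmeasurable" for u l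
    using fmeasurable_Int_fmeasurable[OF Bm, of "(+) l ` P"] tPm by (simp add: fmeasurableD)
  have pcm: "pc (u,l) \<in> lmeasurable" for u l unfolding pc_def using measurable_translation_subtract[OF BtPm] by simp
  have mpc: "measure lebesgue (pc (u,l)) = measure lebesgue (B u \<inter> (+) l ` P)" for u l
    unfolding pc_def using measure_translation_subtract by simp
  have lower: "measure lebesgue (B u) \<le> (\<Sum>l\<in>G u. measure lebesgue (pc (u,l)))" for u
  proof -
    have "B u \<subseteq> (\<Union>l\<in>G u. B u \<inter> (+) l ` P)"
    proof
      fix p assume p: "p \<in> B u"
      from LL_cover[of p] obtain l where l: "l \<in> LL" "p \<in> (+) l ` P" ..
      have "(+) l ` P \<inter> B u \<noteq> {}" using l(2) p by blast
      then have "l \<in> G u" by (simp add: G_def l(1))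
      then show "p \<in> (\<Union>l\<in>G u. B u \<inter> (+) l ` P)" using p l(2) by blast
    qed
    moreover have Um: "(\<Union>l\<in>G u. B u \<inter> (+) l ` P) \<in> lmeasurable"
      by (rule fmeasurable.finite_UN[OF finG BtPm])
    ultimately have "measure lebesgue (B u) \<le> measure lebesgue (\<Union>l\<in>G u. B u \<inter> (+) l ` P)"
      using measure_mono_fmeasurable[OF _ fmeasurableD[OF Bm] Um] by blast
    also have "\<dots> \<le> (\<Sum>l\<in>G u. measure lebesgue (B u \<inter> (+) l ` P))"
      by (rule measure_UNION_le[OF finG]) (simp add: BtPm fmeasurableD)
    finally show ?thesis by (simp add: mpc)
  qed
  define J where "J = Sigma R G"
  have finJ: "finite J" unfolding J_def using R(1) finG by simp
  have pc_mem0: "\<exists>y. y \<in> B u \<and> y \<in> (+) l ` P \<and> p = y - l" if "p \<in> pc (u,l)" for p u l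
  proof -
    from that obtain y where "y \<in> B u \<inter> (+) l ` P" "p = - l + y" unfolding pc_def by (auto simp only: image_iff prod.case)
    then show ?thesis by (rule_tac x=y in exI) simp
  qed
  have pcP: "pc j \<subseteq> P" for j
  proof
    fix p assume p: "p \<in> pc j"
    obtain u l where j: "j = (u,l)" by (metis prod.collapse)
    obtain y where "y \<in> (+) l ` P" "p = y - l" using pc_mem0 p j by blast
    then show "p \<in> P" by (simp add: mem_transl)
  qed
  have pc_mem: "\<exists>q\<in>Q. p = ((1/2) *\<^sub>R u + (1/2) *\<^sub>R q) - l" if pp: "p \<in> pc (u,l)" for p u l
  proof -
    obtain y where y: "y \<in> B u" "p = y - l" using pc_mem0[OF pp] by blast
    from y(1) obtain h where h: "h \<in> Bh" "y = (1/2) *\<^sub>R u + h" unfolding B_def by (auto simp only: image_iff)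
    from h(1) obtain q where q: "q \<in> Q" "h = (1/2) *\<^sub>R q" unfolding Bh_def by (auto simp only: image_iff)
    show ?thesis using y h q by blast
  qed
  have disjp: "pc i \<inter> pc j = {}" if ij: "i \<in> J" "j \<in> J" "i \<noteq> j" for i j
  proof (rule ccontr)
    assume "pc i \<inter> pc j \<noteq> {}"
    then obtain p where p: "p \<in> pc i" "p \<in> pc j" by blast
    obtain u l u' l' where i: "i = (u,l)" and j: "j = (u',l')" by (metis prod.collapse)
    have uR: "u \<in> R" "u' \<in> R" and lL: "l \<in> LL" "l' \<in> LL" using ij by (auto simp: i j J_def G_def)
    obtain q where q1: "q \<in> Q" "p = ((1/2) *\<^sub>R u + (1/2) *\<^sub>R q) - l" using pc_mem p(1) unfolding i by blast
    obtain q' where q2: "q' \<in> Q" "p = ((1/2) *\<^sub>R u' + (1/2) *\<^sub>R q') - l'" using pc_mem p(2) unfolding j by blast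
    have q: "q \<in> Q" "q' \<in> Q" using q1 q2 by auto
    define \<delta> where "\<delta> = (u - 2 *\<^sub>R l) - (u' - 2 *\<^sub>R l')"
    have \<delta>L: "\<delta> \<in> LL" unfolding \<delta>_def
      using R(2) uR lL by (intro LL_diff LL_two) auto
    have qd: "q' = \<delta> + q"
    proof -
      have "2 *\<^sub>R (((1/2) *\<^sub>R u + (1/2) *\<^sub>R q) - l) = 2 *\<^sub>R (((1/2) *\<^sub>R u' + (1/2) *\<^sub>R q') - l')"
        using q1(2) q2(2) by simp
      then have "- 2 *\<^sub>R l + u + q = - 2 *\<^sub>R l' + u' + q'" by (simp add: algebra_simps)
      then show ?thesis by (simp add: \<delta>_def algebra_simps)
    qed
    have "\<delta> = 0"
    proof (rule ccontr)
      assume "\<delta> \<noteq> 0"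
      then have e: "interior ((+) \<delta> ` P) \<inter> interior P = {}" using LL_pack \<delta>L by blast
      have "q' \<in> interior ((+) \<delta> ` P)" using q(1) qd by (simp add: int_tile Q_def)
      then show False using e q(2) by (auto simp: Q_def)
    qed
    then have "u - u' = 2 *\<^sub>R (l - l')" by (simp add: \<delta>_def algebra_simps)
    moreover have "l - l' \<in> LL" using LL_diff lL by blast
    ultimately have "u = u'" using ineq uR by blast
    moreover then have "l = l'" using \<open>\<delta> = 0\<close> by (simp add: \<delta>_def)
    ultimately show False using ij i j by simp
  qed
  have pwd: "pairwise (\<lambda>x y. negligible (pc x \<inter> pc y)) J"
    unfolding pairwise_def
  proof (intro ballI impI)
    fix i j assume "i \<in> J" "j \<in> J" "i \<noteq> j"
    then have "pc i \<inter> pc j = {}" by (rule disjp)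
    then show "negligible (pc i \<inter> pc j)" by simp
  qed
  have pcmJ: "pc j \<in> lmeasurable" if "j \<in> J" for j by (cases j) (simp only: pcm)
  have "measure lebesgue (\<Union>(pc ` J)) = (\<Sum>j\<in>J. measure lebesgue (pc j))"
    using finJ pcmJ pwd by (rule measure_negligible_finite_Union_image)
  moreover have "measure lebesgue (\<Union>(pc ` J)) \<le> measure lebesgue P"
  proof (rule measure_mono_fmeasurable)
    show "\<Union>(pc ` J) \<subseteq> P" using pcP by blast
    show "P \<in> lmeasurable" by (rule Pm)
    have "\<Union>(pc ` J) \<in> lmeasurable"
    proof (rule fmeasurable.finite_UN[OF finJ])
      fix j show "pc j \<in> lmeasurable" by (cases j) (simp only: pcm)
    qed
    then show "\<Union>(pc ` J) \<in> sets lebesgue" by (rule fmeasurableD)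
  qed
  ultimately have sumle: "(\<Sum>j\<in>J. measure lebesgue (pc j)) \<le> measure lebesgue Q" using \<mu>P by simp
  have "(\<Sum>u\<in>R. measure lebesgue (B u)) \<le> (\<Sum>u\<in>R. \<Sum>l\<in>G u. measure lebesgue (pc (u,l)))"
    by (rule sum_mono) (rule lower)
  also have "\<dots> = (\<Sum>j\<in>J. measure lebesgue (pc j))"
  proof -
    have "(\<Sum>u\<in>R. \<Sum>l\<in>G u. measure lebesgue (pc (u,l))) = (\<Sum>(u,l)\<in>Sigma R G. measure lebesgue (pc (u,l)))"
      by (rule sum.Sigma[OF R(1)]) (use finG in blast)
    also have "\<dots> = (\<Sum>j\<in>J. measure lebesgue (pc j))" unfolding J_def by (rule sum.cong) auto
    finally show ?thesis .
  qed
  finally have "real (card R) * ((1/2) ^ DIM('a) * measure lebesgue Q) \<le> measure lebesgue Q"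
    using sumle mB by simp
  then have "(real (card R) * (1/2) ^ DIM('a)) * measure lebesgue Q \<le> 1 * measure lebesgue Q"
    by (simp add: mult.assoc)
  then have "real (card R) * (1/2) ^ DIM('a) \<le> 1" using \<mu>pos by (rule mult_right_le_imp_le)
  then have "real (card R) / 2 ^ DIM('a) \<le> 1" by (simp add: power_one_over)
  then have "real (card R) \<le> 2 ^ DIM('a)" by (simp add: divide_le_eq)
  then show ?thesis using of_nat_le_iff[of "card R" "2^DIM('a)"] by simp
qed

end


lemma gauge_gen:
  fixes P :: "'a::euclidean_space set" and z :: 'a
  assumes cv: "convex P" and cl: "closed P" and z0: "0 \<in> interior P"
    and inf1: "Inf {l. l \<ge> 0 \<and> z \<in> (\<lambda>y. l *\<^sub>R y) ` P} = 1"
  shows "z \<in> P \<and> z \<notin> interior P"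
proof -
  define S where "S = {l. l \<ge> 0 \<and> z \<in> (\<lambda>y. l *\<^sub>R y) ` P}"
  have bdd: "bdd_below S" unfolding S_def by (rule bdd_belowI[of _ 0]) simp
  have P0: "0 \<in> P" using z0 interior_subset by blast
  have memS: "l \<in> S \<longleftrightarrow> (1/l) *\<^sub>R z \<in> P" if "l > 0" for l
  proof
    assume "l \<in> S"
    then obtain p where "p \<in> P" "z = l *\<^sub>R p" unfolding S_def by blast
    then show "(1/l) *\<^sub>R z \<in> P" using that by simp
  next
    assume "(1/l) *\<^sub>R z \<in> P"
    moreover have "z = l *\<^sub>R ((1/l) *\<^sub>R z)" using that by simp
    ultimately show "l \<in> S" unfolding S_def using that by (auto simp: image_iff intro!: bexI[of _ "(1/l) *\<^sub>R z"])
  qed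
  have up: "l' \<in> S" if "l \<in> S" "l \<le> l'" for l l'
  proof (cases "l = 0")
    case True
    then have "z = 0" using that(1) unfolding S_def by auto
    then show ?thesis unfolding S_def using that P0 True by (auto simp: image_iff intro!: bexI[of _ 0])
  next
    case False
    then have l0: "l > 0" using that(1) unfolding S_def by auto
    then have l'0: "l' > 0" using that(2) by simp
    have p: "(1/l) *\<^sub>R z \<in> P" using memS[OF l0] that(1) by blast
    have "(1 - l/l') *\<^sub>R 0 + (l/l') *\<^sub>R ((1/l) *\<^sub>R z) \<in> P"
      using convexD[OF cv P0 p, of "1 - l/l'" "l/l'"] l0 l'0 that(2) by simp
    then have "(1/l') *\<^sub>R z \<in> P" using l0 by simp
    then show ?thesis using memS[OF l'0] by blast
  qed
  obtain r where r: "r > 0" "ball 0 r \<subseteq> P"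
    using z0 open_interior open_contains_ball interior_subset by (metis order_trans)
  have Sne: "S \<noteq> {}"
  proof -
    define l where "l = 2 * norm z / r + 1"
    have l0: "l > 0" using r by (simp add: l_def add_nonneg_pos)
    have "norm z * 2 \<le> l * r" using r by (simp add: l_def field_simps)
    moreover have "l * r > 0" using l0 r by simp
    ultimately have "norm z < l * r" using norm_ge_zero[of z] by linarith
    then have "norm ((1/l) *\<^sub>R z) < r" using l0 r
      by (simp add: divide_less_eq mult.commute)
    then have "(1/l) *\<^sub>R z \<in> P" using r by auto
    then show ?thesis using memS[OF l0] by blast
  qed
  have inf: "Inf S = 1" using inf1 by (simp add: S_def)
  have gt1: "l \<in> S" if "l > 1" for l
  proof -
    have "Inf S < l" using inf that by simp
    then obtain l0 where "l0 \<in> S" "l0 < l" using cInf_less_iff[OF Sne bdd] by blast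
    then show ?thesis using up by auto
  qed
  have zP: "z \<in> P"
  proof (rule ccontr)
    assume "z \<notin> P"
    then obtain e where e: "e > 0" "ball z e \<subseteq> - P" using cl open_contains_ball[of "- P"] by (auto simp: closed_def)
    define \<delta> where "\<delta> = e / (norm z + 1)"
    have n1: "norm z + 1 > 0" using norm_ge_zero[of z] by linarith
    have \<delta>0: "\<delta> > 0" using e n1 by (simp add: \<delta>_def)
    have "(1 + \<delta>) \<in> S" using gt1 \<delta>0 by simp
    then have inP: "(1/(1+\<delta>)) *\<^sub>R z \<in> P" using memS \<delta>0 by simp
    have c: "1 - 1/(1+\<delta>) = \<delta>/(1+\<delta>)" using \<delta>0 by (simp add: field_simps)
    have "z - (1/(1+\<delta>)) *\<^sub>R z = (1 - 1/(1+\<delta>)) *\<^sub>R z" by (simp add: scaleR_left_diff_distrib)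
    then have "z - (1/(1+\<delta>)) *\<^sub>R z = (\<delta>/(1+\<delta>)) *\<^sub>R z" by (simp only: c)
    then have "dist z ((1/(1+\<delta>)) *\<^sub>R z) = (\<delta>/(1+\<delta>)) * norm z" using \<delta>0 by (simp add: dist_norm)
    also have "\<dots> \<le> \<delta> * norm z" using \<delta>0 by (simp add: divide_le_eq field_simps mult_right_mono)
    also have "\<dots> < e" using \<delta>0 n1 e by (simp add: \<delta>_def field_simps)
    finally have "(1/(1+\<delta>)) *\<^sub>R z \<in> ball z e" by simp
    then show False using e inP by blast
  qed
  have "z \<notin> interior P"
  proof
    assume "z \<in> interior P"
    then obtain e where e: "e > 0" "ball z e \<subseteq> P" using open_interior open_contains_ball interior_subset
      by (metis order_trans)
    define \<delta> where "\<delta> = e / (2 * (norm z + 1))"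
    have n1: "norm z + 1 > 0" using norm_ge_zero[of z] by linarith
    have \<delta>0: "\<delta> > 0" using e n1 by (simp add: \<delta>_def)
    have "dist z ((1 + \<delta>) *\<^sub>R z) = \<delta> * norm z" using \<delta>0 by (simp add: dist_norm algebra_simps)
    also have "\<dots> < \<delta> * (norm z + 1)" using \<delta>0 by simp
    also have "\<dots> = e / 2" using n1 by (simp add: \<delta>_def field_simps)
    finally have "(1 + \<delta>) *\<^sub>R z \<in> P" using e by auto
    moreover have l'0: "1/(1+\<delta>) > 0" using \<delta>0 by simp
    ultimately have "1/(1+\<delta>) \<in> S" using memS[OF l'0] \<delta>0 by simp
    then have "Inf S \<le> 1/(1+\<delta>)" using cInf_lower[OF _ bdd] by blast
    moreover have "1/(1+\<delta>) < 1" using \<delta>0 by simp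
    ultimately show False using inf by simp
  qed
  then show ?thesis using zP by blast
qed

theorem proposition3:
  fixes P :: "(real ^ 'n) set"
  assumes "parallelohedron P"
    and "\<forall>x\<in>P. - x \<in> P"
  shows "unit_dist_chromatic_number (gauge_norm P) \<le> enat (2 ^ CARD('n))"
proof -
  from assms(1) obtain T where poly: "polytope P" and intP: "interior P \<noteq> {}" and
    cov: "(\<Union>t\<in>T. (\<lambda>x. t + x) ` P) = UNIV" and
    dj: "\<forall>t\<in>T. \<forall>s\<in>T. t \<noteq> s \<longrightarrow>
            interior ((\<lambda>x. t + x) ` P) \<inter> interior ((\<lambda>x. s + x) ` P) = {} \<and>
            ((\<lambda>x. t + x) ` P \<inter> (\<lambda>x. s + x) ` P) face_of ((\<lambda>x. t + x) ` P) \<and>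
            ((\<lambda>x. t + x) ` P \<inter> (\<lambda>x. s + x) ` P) face_of ((\<lambda>x. s + x) ` P)"
    unfolding parallelohedron_def by blast
  have "polyhedron P" using poly polytope_imp_polyhedron by blast
  then obtain F where F: "finite F" "P = \<Inter>F" "\<forall>h\<in>F. \<exists>a b. a \<noteq> 0 \<and> h = {x. a \<bullet> x \<le> b}"
    unfolding polyhedron_def by blast
  define sel where "sel h = (SOME ab. fst ab \<noteq> 0 \<and> h = {x. fst ab \<bullet> x \<le> snd ab})" for h :: "(real^'n) set"
  have sel: "fst (sel h) \<noteq> 0 \<and> h = {x. fst (sel h) \<bullet> x \<le> snd (sel h)}" if hF: "h \<in> F" for h
  proof -
    obtain a b where "a \<noteq> 0" "h = {x. a \<bullet> x \<le> b}" using F(3) hF by blast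
    then have "\<exists>ab. fst ab \<noteq> 0 \<and> h = {x. fst ab \<bullet> x \<le> snd ab}" by (rule_tac x="(a,b)" in exI) simp
    then show ?thesis unfolding sel_def by (rule someI_ex)
  qed
  define C where "C = sel ` F"
  have Peq: "P = {y. \<forall>(a,b)\<in>C. a \<bullet> y \<le> b}"
  proof (rule set_eqI)
    fix y
    have "y \<in> P \<longleftrightarrow> (\<forall>h\<in>F. y \<in> h)" using F(2) by blast
    also have "\<dots> \<longleftrightarrow> (\<forall>h\<in>F. fst (sel h) \<bullet> y \<le> snd (sel h))"
    proof -
      have "y \<in> h \<longleftrightarrow> fst (sel h) \<bullet> y \<le> snd (sel h)" if "h \<in> F" for h
        using sel[OF that] by blast
      then show ?thesis by blast
    qed
    also have "\<dots> \<longleftrightarrow> (\<forall>(a,b)\<in>C. a \<bullet> y \<le> b)" unfolding C_def by (auto simp: case_prod_unfold)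
    finally show "y \<in> P \<longleftrightarrow> y \<in> {y. \<forall>(a,b)\<in>C. a \<bullet> y \<le> b}" by simp
  qed
  interpret pt: ptiling P T C
  proof
    show "convex P" using poly polytope_imp_convex by blast
    show "compact P" using poly polytope_imp_compact by blast
    show "\<And>x. x \<in> P \<Longrightarrow> - x \<in> P" using assms(2) by blast
    show "interior P \<noteq> {}" by (rule intP)
    show "finite C" unfolding C_def using F(1) by simp
    show "a \<noteq> 0" if ab: "(a, b) \<in> C" for a b
    proof -
      obtain h where h: "h \<in> F" "(a, b) = sel h" using ab unfolding C_def by blast
      then have "fst (sel h) = a" by (metis fst_conv)
      then show ?thesis using sel[OF h(1)] by blast
    qed
    show "P = {y. \<forall>(a, b)\<in>C. a \<bullet> y \<le> b}" by (rule Peq)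
    show "\<And>x. \<exists>t\<in>T. x \<in> (+) t ` P" using cov by blast
    show "\<And>t s. t \<in> T \<Longrightarrow> s \<in> T \<Longrightarrow> t \<noteq> s \<Longrightarrow> interior ((+) t ` P) \<inter> interior ((+) s ` P) = {}"
      using dj by blast
    show "\<And>t s. t \<in> T \<Longrightarrow> s \<in> T \<Longrightarrow> t \<noteq> s \<Longrightarrow> (+) t ` P \<inter> (+) s ` P face_of (+) t ` P"
      using dj by blast
  qed
  define N where "N = (2::nat) ^ CARD('n)"
  have DIMn: "DIM(real^'n) = CARD('n)" by simp
  obtain d where d: "\<forall>(a,b)\<in>C. a \<bullet> d \<noteq> 0" using pt.dir_exists by blast
  obtain t0 where t0: "t0 \<in> T" using pt.T_ne by blast
  define good where "good X t \<longleftrightarrow> t \<in> T \<and> (\<exists>e>0. \<forall>\<epsilon>. 0 < \<epsilon> \<and> \<epsilon> \<le> e \<longrightarrow> X + \<epsilon> *\<^sub>R d \<in> interior ((+) t ` P))"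
    for X t
  define tl where "tl X = (SOME t. good X t)" for X
  have tl: "good X (tl X)" for X
  proof -
    have "\<exists>t. good X t" using pt.tile_choice[OF d, of X] unfolding good_def by blast
    then show ?thesis unfolding tl_def by (rule someI_ex)
  qed
  define E where "E = {(u,u'). u \<in> pt.LL \<and> u' \<in> pt.LL \<and> (\<exists>l\<in>pt.LL. u - u' = 2 *\<^sub>R l)}"
  have eqv: "equiv pt.LL E"
  proof (rule equivI)
    show "refl_on pt.LL E"
      unfolding refl_on_def E_def using pt.LL_zero by auto
    show "sym E"
    proof (rule symI)
      fix u u' assume "(u, u') \<in> E"
      then obtain l where "u \<in> pt.LL" "u' \<in> pt.LL" "l \<in> pt.LL" "u - u' = 2 *\<^sub>R l" unfolding E_def by blast
      moreover have "u' - u = 2 *\<^sub>R (- l)" using \<open>u - u' = 2 *\<^sub>R l\<close> by (simp add: algebra_simps)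
      ultimately show "(u', u) \<in> E" unfolding E_def using pt.LL_neg by blast
    qed
    show "trans E"
    proof (rule transI)
      fix u u' u'' assume "(u, u') \<in> E" "(u', u'') \<in> E"
      then obtain l l' where "u \<in> pt.LL" "u'' \<in> pt.LL" "l \<in> pt.LL" "l' \<in> pt.LL"
        "u - u' = 2 *\<^sub>R l" "u' - u'' = 2 *\<^sub>R l'" unfolding E_def by blast
      moreover have "u - u'' = 2 *\<^sub>R (l + l')" using calculation(5,6) by (simp add: algebra_simps)
      ultimately show "(u, u'') \<in> E" unfolding E_def using pt.LL_add by blast
    qed
    show "E \<subseteq> pt.LL \<times> pt.LL" unfolding E_def by auto
  qed
  define A where "A = pt.LL // E"
  define rep where "rep c = (SOME u. u \<in> c)" for c :: "(real^'n) set"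
  have rep: "rep c \<in> pt.LL \<and> E `` {rep c} = c" if cA: "c \<in> A" for c
  proof -
    obtain u where u: "u \<in> pt.LL" "c = E `` {u}" using cA unfolding A_def by (auto elim: quotientE)
    have "u \<in> c" using equiv_class_self[OF eqv u(1)] u(2) by simp
    then have rc: "rep c \<in> c" unfolding rep_def by (rule someI)
    then have "(u, rep c) \<in> E" using u by simp
    then have "E `` {rep c} = E `` {u}" using eqv by (metis equiv_class_eq)
    moreover have "rep c \<in> pt.LL" using \<open>(u, rep c) \<in> E\<close> unfolding E_def by blast
    ultimately show ?thesis using u by simp
  qed
  have finA: "finite A \<and> card A \<le> N"
  proof (rule ccontr)
    assume nA: "\<not> (finite A \<and> card A \<le> N)"
    obtain A' where A': "A' \<subseteq> A" "finite A'" "card A' = Suc N"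
    proof (cases "finite A")
      case True
      then have "Suc N \<le> card A" using nA by simp
      then show ?thesis using obtain_subset_with_card_n that by metis
    next
      case False
      then show ?thesis using infinite_arbitrarily_large that by metis
    qed
    define R where "R = rep ` A'"
    have inj: "inj_on rep A'"
    proof (rule inj_onI)
      fix c c' assume "c \<in> A'" "c' \<in> A'" "rep c = rep c'"
      then show "c = c'" using rep A'(1) by (metis subsetD)
    qed
    have cR: "card R = Suc N" unfolding R_def using card_image[OF inj] A'(3) by simp
    have "card R \<le> 2 ^ DIM(real^'n)"
    proof (rule pt.count_classes)
      show "finite R" unfolding R_def using A'(2) by simp
      show "R \<subseteq> pt.LL" unfolding R_def using rep A'(1) by blast
      fix u u' assume uu: "u \<in> R" "u' \<in> R" "u \<noteq> u'"
      show "\<not> (\<exists>l\<in>pt.LL. u - u' = 2 *\<^sub>R l)"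
      proof
        assume "\<exists>l\<in>pt.LL. u - u' = 2 *\<^sub>R l"
        obtain c c' where cc: "c \<in> A'" "c' \<in> A'" "u = rep c" "u' = rep c'" using uu unfolding R_def by blast
        have "u \<in> pt.LL" "u' \<in> pt.LL" using cc rep A'(1) by blast+
        then have "(u, u') \<in> E" unfolding E_def using \<open>\<exists>l\<in>pt.LL. u - u' = 2 *\<^sub>R l\<close> by blast
        then have "E `` {u} = E `` {u'}" using eqv by (metis equiv_class_eq)
        then have "c = c'" using cc rep A'(1) by (metis subsetD)
        then show False using cc uu(3) by simp
      qed
    qed
    then show False using cR DIMn by (simp add: N_def)
  qed
  obtain g where g: "g ` A \<subseteq> {..<N}" "inj_on g A"
    using card_le_inj[of A "{..<N}"] finA by auto
  define col where "col x = g (E `` {tl (2 *\<^sub>R x) - t0})" for x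
  have clA: "E `` {tl X - t0} \<in> A" for X
  proof -
    have "tl X \<in> T" using tl[of X] unfolding good_def by blast
    then have "tl X - t0 \<in> pt.LL" using pt.T_LL[OF t0] by blast
    then show ?thesis unfolding A_def by (rule quotientI)
  qed
  have colN: "col x < N" for x using g(1) clA unfolding col_def by blast
  have colOK: "col x \<noteq> col y" if g1: "gauge_norm P (x - y) = 1" for x y
  proof
    assume same: "col x = col y"
    define t where "t = tl (2 *\<^sub>R x)"
    define s where "s = tl (2 *\<^sub>R y)"
    have "E `` {t - t0} = E `` {s - t0}"
      using same g(2) clA unfolding col_def t_def s_def by (meson inj_on_eq_iff)
    moreover have "t - t0 \<in> pt.LL" "s - t0 \<in> pt.LL"
      using tl pt.T_LL[OF t0] unfolding good_def t_def s_def by blast+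
    ultimately have "(t - t0, s - t0) \<in> E" using eqv by (simp add: eq_equiv_class_iff)
    then obtain l where l: "l \<in> pt.LL" "t - s = 2 *\<^sub>R l" unfolding E_def by auto
    obtain e1 where e1: "e1 > 0" "\<forall>\<epsilon>. 0 < \<epsilon> \<and> \<epsilon> \<le> e1 \<longrightarrow> 2 *\<^sub>R x + \<epsilon> *\<^sub>R d \<in> interior ((+) t ` P)"
      using tl[of "2 *\<^sub>R x"] unfolding good_def t_def by blast
    obtain e2 where e2: "e2 > 0" "\<forall>\<epsilon>. 0 < \<epsilon> \<and> \<epsilon> \<le> e2 \<longrightarrow> 2 *\<^sub>R y + \<epsilon> *\<^sub>R d \<in> interior ((+) s ` P)"
      using tl[of "2 *\<^sub>R y"] unfolding good_def s_def by blast
    define \<epsilon> where "\<epsilon> = min e1 e2"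
    have \<epsilon>: "0 < \<epsilon>" "\<epsilon> \<le> e1" "\<epsilon> \<le> e2" using e1 e2 by (auto simp: \<epsilon>_def)
    define q where "q = 2 *\<^sub>R x + \<epsilon> *\<^sub>R d - t"
    define q' where "q' = 2 *\<^sub>R y + \<epsilon> *\<^sub>R d - s"
    have q: "q \<in> interior P" using e1(2) \<epsilon> by (simp add: q_def pt.int_tile mem_transl)
    have q': "q' \<in> interior P" using e2(2) \<epsilon> by (simp add: q'_def pt.int_tile mem_transl)
    have "(1/2) *\<^sub>R q + (1/2) *\<^sub>R (- q') \<in> interior P"
      using convexD[OF convex_interior[OF pt.convP] q pt.int_sym[OF q'], of "1/2" "1/2"] by simp
    moreover have "(1/2) *\<^sub>R q + (1/2) *\<^sub>R (- q') = (x - y) - l"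
    proof -
      have "2 *\<^sub>R ((1/2) *\<^sub>R q + (1/2) *\<^sub>R (- q')) = q - q'" by (simp add: algebra_simps)
      also have "\<dots> = 2 *\<^sub>R x - 2 *\<^sub>R y - (t - s)" by (simp add: q_def q'_def algebra_simps)
      also have "\<dots> = 2 *\<^sub>R ((x - y) - l)" using l(2) by (simp add: algebra_simps)
      finally show ?thesis by simp
    qed
    ultimately have zl: "(x - y) - l \<in> interior P" by simp
    have "x - y \<in> P \<and> x - y \<notin> interior P"
      by (rule gauge_gen[OF pt.convP pt.closedP pt.zero_int]) (use g1 in \<open>simp add: gauge_norm_def\<close>)
    then have zP: "x - y \<in> P" and zi: "x - y \<notin> interior P" by auto
    show False
    proof (cases "l = 0")
      case True then show False using zl zi by simp
    next
      case False
      have e: "interior ((+) l ` P) \<inter> interior P = {}" using pt.LL_pack[OF l(1) False] .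
      have "x - y \<in> interior ((+) l ` P)" using zl by (simp add: pt.int_tile mem_transl)
      moreover have "x - y \<in> closure (interior P)" using pt.P_clint[OF zP] .
      ultimately have "interior ((+) l ` P) \<inter> closure (interior P) \<noteq> {}" by blast
      then have "interior ((+) l ` P) \<inter> interior P \<noteq> {}"
        using open_Int_closure_eq_empty[OF open_interior] by blast
      then show False using e by simp
    qed
  qed
  have "enat N \<in> {enat k | k. \<exists>c :: real^'n \<Rightarrow> nat. (\<forall>x. c x < k) \<and>
                        (\<forall>x y. gauge_norm P (x - y) = 1 \<longrightarrow> c x \<noteq> c y)}"
    using colN colOK by blast
  then show ?thesis unfolding unit_dist_chromatic_number_def N_def by (rule Inf_lower)
qed


end
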